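(* Let $f:\mathbb{R}^n\to\mathbb{R}$ be bounded below and continuously differentiable with $\nabla f$ Lipschitz with constant $L_{\nabla f}$. Let $x\in\mathbb{R}^n$, $\Delta>0$, points $y_1,\ldots,y_p$ with $\|y_i-x\|\le\beta\Delta$ for some $\beta>0$ and all $i$, and let $m$ be the minimum Frobenius norm quadratic interpolation model described in the context, with $\hat F$ invertible. Then its Hessian satisfies $\|H\|\le\kappa_H:=\frac{L_{\nabla f}}{2}p\beta^4\|\hat F^{-1}\|_\infty$.
   Context: Here $n+2\le p\le(n+1)(n+2)/2-1$. Let $\hat s_i=(y_i-x)/\Delta$, $\hat M\in\mathbb{R}^{p\times(n+1)}$ with $i$-th row $[1,\hat s_i^T]$, $\hat P\in\mathbb{R}^{p\times p}$ with $\hat P_{ij}=\tfrac12(\hat s_i^T\hat s_j)^2$, and $\hat F=\begin{bmatrix}\hat P&\hat M\\ \hat M^T&0\end{bmatrix}\in\mathbb{R}^{(p+n+1)\times(p+n+1)}$. The model is $m(y)=c+g^T(y-x)+\tfrac12(y-x)^TH(y-x)$ where $(\hat\lambda_1,\ldots,\hat\lambda_p,c,\hat g)$ solves $\hat F[\hat\lambda;c;\hat g]=[f(y_1);\ldots;f(y_p);0;0_n]$, $g=\hat g/\Delta$, and $H=\sum_{i=1}^p\lambda_i(y_i-x)(y_i-x)^T$ with $\lambda_i=\hat\lambda_i/\Delta^4$; equivalently $(c,g,H)$ minimizes $\tfrac14\|H\|_F^2$ over symmetric $H$ subject to $m(y_i)=f(y_i)$ for all $i$. $\|A\|_\infty$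 is the maximum absolute row sum; $\|H\|$ is the operator 2-norm. *)

theory Defs
  imports "HOL-Analysis.Analysis"
begin

text \<open>Index set of the (p+n+1)x(p+n+1) matrix F-hat: rows/columns Inl i (i<p) for the
  lambda-block, Inr None for c, Inr (Some k) (k::'n) for the components of g-hat.\<close>

type_synonym 'n fidx = "nat + 'n option"

definition fidx_set :: "nat \<Rightarrow> 'n fidx set" where
  "fidx_set p = Inl ` {..<p} \<union> Inr ` UNIV"

definition shat :: "real^'n \<Rightarrow> real \<Rightarrow> (nat \<Rightarrow> real^'n) \<Rightarrow> nat \<Rightarrow> real^'n" where
  "shat x \<Delta> y i = (1 / \<Delta>) *\<^sub>R (y i - x)"

definition Fhat :: "real^'n \<Rightarrow> real \<Rightarrow> (nat \<Rightarrow> real^'n) \<Rightarrow> 'n fidx \<Rightarrow> 'n fidx \<Rightarrow> real" where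
  "Fhat x \<Delta> y a b =
     (case a of
        Inl i \<Rightarrow> (case b of
                    Inl j \<Rightarrow> (1/2) * (shat x \<Delta> y i \<bullet> shat x \<Delta> y j)^2
                  | Inr None \<Rightarrow> 1
                  | Inr (Some k) \<Rightarrow> shat x \<Delta> y i $ k)
      | Inr None \<Rightarrow> (case b of Inl j \<Rightarrow> 1 | Inr _ \<Rightarrow> 0)
      | Inr (Some k) \<Rightarrow> (case b of Inl j \<Rightarrow> shat x \<Delta> y j $ k | Inr _ \<Rightarrow> 0))"

definition is_inverse_on :: "'a set \<Rightarrow> ('a \<Rightarrow> 'a \<Rightarrow> real) \<Rightarrow> ('a \<Rightarrow> 'a \<Rightarrow> real) \<Rightarrow> bool" where
  "is_inverse_on I A B \<longleftrightarrow>
     (\<forall>a\<in>I. \<forall>b\<in>I. (\<Sum>c\<in>I. A a c * B c b) = (if a = b then 1 else 0)) \<and>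
     (\<forall>a\<in>I. \<forall>b\<in>I. (\<Sum>c\<in>I. B a c * A c b) = (if a = b then 1 else 0))"

definition invertible_on :: "'a set \<Rightarrow> ('a \<Rightarrow> 'a \<Rightarrow> real) \<Rightarrow> bool" where
  "invertible_on I A \<longleftrightarrow> (\<exists>B. is_inverse_on I A B)"

definition inv_on :: "'a set \<Rightarrow> ('a \<Rightarrow> 'a \<Rightarrow> real) \<Rightarrow> 'a \<Rightarrow> 'a \<Rightarrow> real" where
  "inv_on I A = (SOME B. is_inverse_on I A B)"

definition infnorm_on :: "'a set \<Rightarrow> ('a \<Rightarrow> 'a \<Rightarrow> real) \<Rightarrow> real" where
  "infnorm_on I A = Max ((\<lambda>a. \<Sum>b\<in>I. \<bar>A a b\<bar>) ` I)"

text \<open>Solution of Fhat [lambda-hat; c; g-hat] = [f(y_1); ...; f(y_p); 0; 0].\<close>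
definition mfn_sol :: "(real^'n \<Rightarrow> real) \<Rightarrow> real^'n \<Rightarrow> real \<Rightarrow> nat \<Rightarrow> (nat \<Rightarrow> real^'n) \<Rightarrow> 'n fidx \<Rightarrow> real" where
  "mfn_sol f x \<Delta> p y a =
     (\<Sum>b\<in>fidx_set p. inv_on (fidx_set p) (Fhat x \<Delta> y) a b *
        (case b of Inl i \<Rightarrow> f (y i) | Inr _ \<Rightarrow> 0))"

definition mfn_c :: "(real^'n \<Rightarrow> real) \<Rightarrow> real^'n \<Rightarrow> real \<Rightarrow> nat \<Rightarrow> (nat \<Rightarrow> real^'n) \<Rightarrow> real" where
  "mfn_c f x \<Delta> p y = mfn_sol f x \<Delta> p y (Inr None)"

definition mfn_g :: "(real^'n \<Rightarrow> real) \<Rightarrow> real^'n \<Rightarrow> real \<Rightarrow> nat \<Rightarrow> (nat \<Rightarrow> real^'n) \<Rightarrow> real^'n" where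
  "mfn_g f x \<Delta> p y = (\<chi> k. mfn_sol f x \<Delta> p y (Inr (Some k)) / \<Delta>)"

definition mfn_H :: "(real^'n \<Rightarrow> real) \<Rightarrow> real^'n \<Rightarrow> real \<Rightarrow> nat \<Rightarrow> (nat \<Rightarrow> real^'n) \<Rightarrow> real^'n^'n" where
  "mfn_H f x \<Delta> p y =
     (\<Sum>i<p. (mfn_sol f x \<Delta> p y (Inl i) / \<Delta>^4) *\<^sub>R
               (\<chi> a b. (y i - x) $ a * (y i - x) $ b))"

definition mfn_model :: "(real^'n \<Rightarrow> real) \<Rightarrow> real^'n \<Rightarrow> real \<Rightarrow> nat \<Rightarrow> (nat \<Rightarrow> real^'n) \<Rightarrow> real^'n \<Rightarrow> real" where
  "mfn_model f x \<Delta> p y z = mfn_c f x \<Delta> p y + mfn_g f x \<Delta> p y \<bullet> (z - x)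
      + (1/2) * ((z - x) \<bullet> (mfn_H f x \<Delta> p y *v (z - x)))"

end

theory Submission
  imports Defs
begin

lemma taylor_lip_upper:
  fixes f :: "real^'n \<Rightarrow> real" and grad :: "real^'n \<Rightarrow> real^'n"
  assumes deriv: "\<And>z. (f has_derivative (\<lambda>h. grad z \<bullet> h)) (at z)"
    and lip: "\<And>u v. norm (grad u - grad v) \<le> L * norm (u - v)"
    and s: "s = 1 \<or> s = -1"
  shows "s * (f y - f x - grad x \<bullet> (y - x)) \<le> L / 2 * (norm (y - x))^2"
proof -
  define h where "h = y - x"
  define \<phi> where "\<phi> t = s * (f (x + t *\<^sub>R h) - t * (grad x \<bullet> h)) - L / 2 * t^2 * (norm h)^2" for t
  have D: "DERIV \<phi> t :> s * ((grad (x + t *\<^sub>R h) - grad x) \<bullet> h) - L * t * (norm h)^2" for t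
  proof -
    have l: "((\<lambda>t. x + t *\<^sub>R h) has_derivative (\<lambda>u. u *\<^sub>R h)) (at t)"
      by (auto intro!: derivative_eq_intros)
    have c: "((\<lambda>t. f (x + t *\<^sub>R h)) has_derivative (\<lambda>u. grad (x + t *\<^sub>R h) \<bullet> (u *\<^sub>R h))) (at t)"
      using has_derivative_compose[OF l deriv] by (simp add: o_def)
    have c2: "((\<lambda>t. f (x + t *\<^sub>R h)) has_real_derivative (grad (x + t *\<^sub>R h) \<bullet> h)) (at t)"
      unfolding has_field_derivative_def using c by (simp add: mult.commute[of _ "grad (x + t *\<^sub>R h) \<bullet> h"] cong: rev_conj_cong)
    show ?thesis unfolding \<phi>_def
      by (rule derivative_eq_intros c2 refl | simp)+ (simp add: algebra_simps inner_diff_left)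
  qed
  have nonpos: "s * ((grad (x + t *\<^sub>R h) - grad x) \<bullet> h) - L * t * (norm h)^2 \<le> 0" if "0 \<le> t" for t
  proof -
    have "s * ((grad (x + t *\<^sub>R h) - grad x) \<bullet> h) \<le> norm (grad (x + t *\<^sub>R h) - grad x) * norm h"
      using s Cauchy_Schwarz_ineq2[of "grad (x + t *\<^sub>R h) - grad x" h] by auto
    also have "\<dots> \<le> L * norm (t *\<^sub>R h) * norm h"
      using lip[of "x + t *\<^sub>R h" x] by (simp add: mult_right_mono)
    also have "\<dots> = L * t * (norm h)^2" using that by (simp add: power2_eq_square)
    finally show ?thesis by simp
  qed
  have "\<phi> 1 \<le> \<phi> 0"
    by (rule DERIV_nonpos_imp_nonincreasing[of 0 1]) (auto intro!: exI[of _ "s * ((grad (x + _ *\<^sub>R h) - grad x) \<bullet> h) - L * _ * (norm h)^2"] D nonpos)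
  thus ?thesis unfolding \<phi>_def h_def by (simp add: algebra_simps)
qed

lemma mv_outer:
  fixes h :: "nat \<Rightarrow> real^'n" and v :: "real^'n"
  shows "(\<Sum>i\<in>A. c i *\<^sub>R (\<chi> a b. h i $ a * h i $ b)) *v v = (\<Sum>i\<in>A. (c i * (h i \<bullet> v)) *\<^sub>R h i)"
proof (cases "finite A")
  case True
  then show ?thesis
    by (simp add: vec_eq_iff matrix_vector_mult_def sum_component inner_vec_def sum_distrib_left
        sum_distrib_right sum.swap[of _ A])
      (auto intro!: sum.cong simp: algebra_simps)
qed simp

lemma fin_fidx: "finite (fidx_set p :: 'n::finite fidx set)"
  unfolding fidx_set_def by simp

theorem lemma5p14:
  fixes f :: "real^'n \<Rightarrow> real" and grad :: "real^'n \<Rightarrow> real^'n"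
    and x :: "real^'n" and y :: "nat \<Rightarrow> real^'n"
    and \<Delta> \<beta> L :: real and p :: nat
  assumes p_lo: "CARD('n) + 2 \<le> p"
    and p_hi: "p \<le> (CARD('n) + 1) * (CARD('n) + 2) div 2 - 1"
    and bdd: "\<exists>b. \<forall>z. b \<le> f z"
    and deriv: "\<And>z. (f has_derivative (\<lambda>h. grad z \<bullet> h)) (at z)"
    and grad_cont: "continuous_on UNIV grad"
    and lip: "\<And>u v. norm (grad u - grad v) \<le> L * norm (u - v)"
    and Delta_pos: "\<Delta> > 0" and beta_pos: "\<beta> > 0"
    and pts: "\<And>i. i < p \<Longrightarrow> norm (y i - x) \<le> \<beta> * \<Delta>"
    and inv: "invertible_on (fidx_set p) (Fhat x \<Delta> y)"
  shows "onorm (\<lambda>v. mfn_H f x \<Delta> p y *v v)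
           \<le> L / 2 * real p * \<beta>^4 * infnorm_on (fidx_set p) (inv_on (fidx_set p) (Fhat x \<Delta> y))"
proof -
  define I where "I = (fidx_set p :: 'n fidx set)"
  define F where "F = Fhat x \<Delta> y"
  define B where "B = inv_on I F"
  have finI: "finite I" unfolding I_def by (rule fin_fidx)
  have hB: "is_inverse_on I F B"
    using inv unfolding B_def inv_on_def invertible_on_def I_def F_def by (rule someI_ex)
  have BF: "\<And>a c. a \<in> I \<Longrightarrow> c \<in> I \<Longrightarrow> (\<Sum>b\<in>I. B a b * F b c) = (if a = c then 1 else 0)"
    using hB unfolding is_inverse_on_def by blast
  have L0: "0 \<le> L"
  proof -
    obtain k :: 'n where True by blast
    have "0 \<le> norm (grad 0 - grad (axis k 1))" by simp
    also have "\<dots> \<le> L * norm (0 - axis k (1::real))" by (rule lip)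
    finally show ?thesis by (simp add: norm_minus_commute)
  qed
  define w :: "'n fidx \<Rightarrow> real" where
    "w b = (case b of Inl _ \<Rightarrow> 0 | Inr None \<Rightarrow> f x | Inr (Some k) \<Rightarrow> \<Delta> * grad x $ k)" for b
  define r where "r b = (case b of Inl i \<Rightarrow> f (y i) | Inr _ \<Rightarrow> 0)" for b :: "'n fidx"
  define r' where "r' b = (case b of Inl j \<Rightarrow> f (y j) - f x - grad x \<bullet> (y j - x) | Inr _ \<Rightarrow> 0)" for b :: "'n fidx"
  have IU: "I = Inl ` {..<p} \<union> Inr ` UNIV" unfolding I_def fidx_set_def ..
  have Fw: "(\<Sum>c\<in>I. F b c * w c) = (case b of Inl j \<Rightarrow> f x + grad x \<bullet> (y j - x) | Inr _ \<Rightarrow> 0)" for b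
  proof -
    have "(\<Sum>c\<in>I. F b c * w c) = (\<Sum>c\<in>Inl ` {..<p}. F b c * w c) + (\<Sum>c\<in>Inr ` UNIV. F b c * w c)"
      unfolding IU by (rule sum.union_disjoint) auto
    also have "(\<Sum>c\<in>Inl ` {..<p}. F b c * w c) = 0" by (intro sum.neutral) (auto simp: w_def)
    also have "(\<Sum>c\<in>Inr ` UNIV. F b c * w c) = (\<Sum>q\<in>UNIV. F b (Inr q) * w (Inr q))"
      by (simp add: sum.reindex)
    also have "\<dots> = F b (Inr None) * f x + (\<Sum>k\<in>UNIV. F b (Inr (Some k)) * (\<Delta> * grad x $ k))"
      unfolding UNIV_option_conv by (simp add: sum.reindex w_def)
    also have "\<dots> = (case b of Inl j \<Rightarrow> f x + grad x \<bullet> (y j - x) | Inr _ \<Rightarrow> 0)"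
    proof (cases b)
      case (Inl j)
      have "(\<Sum>k\<in>UNIV. F b (Inr (Some k)) * (\<Delta> * grad x $ k)) = (\<Sum>k\<in>UNIV. grad x $ k * (y j - x) $ k)"
        using Delta_pos by (intro sum.cong) (auto simp: Inl F_def Fhat_def shat_def)
      then show ?thesis using Inl by (simp add: F_def Fhat_def inner_vec_def)
    next
      case (Inr q)
      then show ?thesis by (cases q) (auto simp: F_def Fhat_def)
    qed
    finally show ?thesis by simp
  qed
  have sol: "mfn_sol f x \<Delta> p y (Inl i) = (\<Sum>b\<in>I. B (Inl i) b * r' b)" if "i < p" for i
  proof -
    have aI: "Inl i \<in> I" using that unfolding IU by auto
    have rr: "r b = r' b + (\<Sum>c\<in>I. F b c * w c)" for b
      unfolding Fw r_def r'_def by (cases b) auto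
    have "mfn_sol f x \<Delta> p y (Inl i) = (\<Sum>b\<in>I. B (Inl i) b * r b)"
      unfolding mfn_sol_def B_def I_def F_def r_def ..
    also have "\<dots> = (\<Sum>b\<in>I. B (Inl i) b * r' b) + (\<Sum>b\<in>I. \<Sum>c\<in>I. B (Inl i) b * (F b c * w c))"
      unfolding rr by (simp add: distrib_left sum.distrib sum_distrib_left)
    also have "(\<Sum>b\<in>I. \<Sum>c\<in>I. B (Inl i) b * (F b c * w c)) = (\<Sum>c\<in>I. (\<Sum>b\<in>I. B (Inl i) b * F b c) * w c)"
      by (subst sum.swap) (simp add: sum_distrib_right mult.assoc)
    also have "\<dots> = (\<Sum>c\<in>I. (if Inl i = c then 1 else 0) * w c)"
      using BF[OF aI] by (intro sum.cong) auto
    also have "\<dots> = (\<Sum>c\<in>I. if c = Inl i then w c else 0)" by (intro sum.cong) auto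
    also have "\<dots> = 0" using finI aI by (simp add: w_def)
    finally show ?thesis by simp
  qed
  define R where "R = L / 2 * (\<beta> * \<Delta>)^2"
  have rb: "\<bar>r' b\<bar> \<le> R" if "b \<in> I" for b
  proof (cases b)
    case (Inl j)
    with that have jp: "j < p" unfolding IU by auto
    have "\<bar>f (y j) - f x - grad x \<bullet> (y j - x)\<bar> \<le> L / 2 * (norm (y j - x))^2"
      using taylor_lip_upper[OF deriv lip, of 1 "y j" x] taylor_lip_upper[OF deriv lip, of "-1" "y j" x]
      unfolding abs_le_iff by simp
    also have "\<dots> \<le> R" unfolding R_def
      using pts[OF jp] L0 by (intro mult_left_mono power_mono) auto
    finally show ?thesis using Inl r'_def by simp
  next
    case (Inr q)
    then show ?thesis using L0 by (simp add: r'_def R_def)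
  qed
  define N where "N = infnorm_on I B"
  have R0: "0 \<le> R" unfolding R_def using L0 by simp
  have lam: "\<bar>mfn_sol f x \<Delta> p y (Inl i)\<bar> \<le> N * R" if "i < p" for i
  proof -
    have aI: "Inl i \<in> I" using that unfolding IU by auto
    have "\<bar>mfn_sol f x \<Delta> p y (Inl i)\<bar> \<le> (\<Sum>b\<in>I. \<bar>B (Inl i) b\<bar> * \<bar>r' b\<bar>)"
      unfolding sol[OF that] by (rule order_trans[OF sum_abs]) (simp add: abs_mult)
    also have "\<dots> \<le> (\<Sum>b\<in>I. \<bar>B (Inl i) b\<bar> * R)"
      using rb by (intro sum_mono mult_left_mono) auto
    also have "\<dots> = (\<Sum>b\<in>I. \<bar>B (Inl i) b\<bar>) * R" by (simp add: sum_distrib_right)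
    also have "\<dots> \<le> N * R"
      unfolding N_def infnorm_on_def using finI aI R0
      by (intro mult_right_mono Max_ge) auto
    finally show ?thesis .
  qed
  have "onorm (\<lambda>v. mfn_H f x \<Delta> p y *v v) \<le> real p * (N * R / \<Delta>^4 * (\<beta> * \<Delta>)^2)"
  proof (rule onorm_le)
    fix v :: "real^'n"
    have "norm (mfn_H f x \<Delta> p y *v v)
        = norm (\<Sum>i<p. (mfn_sol f x \<Delta> p y (Inl i) / \<Delta>^4 * ((y i - x) \<bullet> v)) *\<^sub>R (y i - x))"
      unfolding mfn_H_def mv_outer ..
    also have "\<dots> \<le> (\<Sum>i<p. norm ((mfn_sol f x \<Delta> p y (Inl i) / \<Delta>^4 * ((y i - x) \<bullet> v)) *\<^sub>R (y i - x)))"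
      by (rule norm_sum)
    also have "\<dots> \<le> (\<Sum>i<p. N * R / \<Delta>^4 * (\<beta> * \<Delta>)^2 * norm v)"
    proof (rule sum_mono)
      fix i assume "i \<in> {..<p}"
      hence ip: "i < p" by simp
      have "norm ((mfn_sol f x \<Delta> p y (Inl i) / \<Delta>^4 * ((y i - x) \<bullet> v)) *\<^sub>R (y i - x))
          = \<bar>mfn_sol f x \<Delta> p y (Inl i)\<bar> / \<Delta>^4 * (\<bar>(y i - x) \<bullet> v\<bar> * norm (y i - x))"
        using Delta_pos by (simp add: abs_mult)
      also have "\<dots> \<le> N * R / \<Delta>^4 * ((norm (y i - x) * norm v) * norm (y i - x))"
        using Delta_pos lam[OF ip] Cauchy_Schwarz_ineq2[of "y i - x" v]
        by (intro mult_mono divide_right_mono) auto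
      also have "\<dots> = N * R / \<Delta>^4 * (norm (y i - x))^2 * norm v" by (simp add: power2_eq_square)
      also have "\<dots> \<le> N * R / \<Delta>^4 * (\<beta> * \<Delta>)^2 * norm v"
      proof -
        have "0 \<le> N * R" using lam[OF ip] by (meson abs_ge_zero order_trans)
        then show ?thesis using Delta_pos pts[OF ip]
          by (intro mult_right_mono mult_left_mono power_mono) auto
      qed
      finally show "norm ((mfn_sol f x \<Delta> p y (Inl i) / \<Delta>^4 * ((y i - x) \<bullet> v)) *\<^sub>R (y i - x))
          \<le> N * R / \<Delta>^4 * (\<beta> * \<Delta>)^2 * norm v" .
    qed
    also have "\<dots> = real p * (N * R / \<Delta>^4 * (\<beta> * \<Delta>)^2) * norm v" by simp
    finally show "norm (mfn_H f x \<Delta> p y *v v) \<le> real p * (N * R / \<Delta>^4 * (\<beta> * \<Delta>)^2) * norm v" .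
  qed
  also have "real p * (N * R / \<Delta>^4 * (\<beta> * \<Delta>)^2) = L / 2 * real p * \<beta>^4 * N"
    unfolding R_def using Delta_pos by (simp add: field_simps eval_nat_numeral)
  finally show ?thesis unfolding N_def B_def I_def F_def .
qed

end
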